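(* Consider the strong recursive skeletonization procedure described in the context, applied to $K$, with arbitrary choices of the partitions $\mathcal{B}_m=\mathcal{R}_m\cup\mathcal{S}_m$ and interpolation matrices at each step (assuming the pivot blocks are invertible). Let $\ell\ge1$ and let $r$ be the number of the last box at level $\ell$, and let $A=Z(K;\mathcal{B}_1,\dots,\mathcal{B}_r)$. For every box $j>r$, let $\mathcal{B}_j$ be the set of DOFs active in $A$ whose points lie in box $j$, and $\mathcal{F}_j$ the set of DOFs active in $A$ that lie neither in box $j$ nor in any neighbor of box $j$ at the level of box $j$. Then $$A_{\mathcal{F}_j\mathcal{B}_j}=K_{\mathcal{F}_j\mathcal{B}_j}\quad\text{and}\quad A_{\mathcal{B}_j\mathcal{F}_j}=K_{\mathcal{B}_j\mathcal{F}_j}\qquad\text{for all } j>r.$$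
   Context: Let $K\in\mathbb{C}^{N\times N}$ have rows and columns indexed by $[N]=\{1,\dots,N\}$; each index (a "DOF") $i$ is associated with a point $x_i\in\mathbb{R}^d$, $d\in\{2,3\}$, in a cube $\Omega$. For index sets $\mathcal{I},\mathcal{J}$, $A_{\mathcal{I}\mathcal{J}}$ is the corresponding submatrix. A uniformly refined quadtree ($d=2$) or octree ($d=3$) decomposition of $\Omega$ is given, with levels numbered from the finest $\ell=1$ (leaves) to the root $\ell=L$; boxes at level $\ell$ have sidelength $D_\ell=2^{\ell-1}D_1$. Two distinct boxes at the same level are neighbors if they are adjacent. Boxes are numbered $1,2,\dots$ along a fixed bottom-up level-by-level traversal (every box of level $\ell$ precedes every box of level $\ell+1$). Procedure: maintain a matrix $A$ (initially $A=K$) and a set of active DOFs (initially all of $[N]$). Boxes are processed in order. When box $m$, at level $\ell$, is processed: $\mathcal{B}_m$ is the set of active DOFs whose points lie in box $m$ (for $\ell>1$ this is the union of the skeleton sets $\mathcal{S}_c$ of the children $c$ of box $m$); $\mathcal{N}_m$ is the set of active DOFs lying in the level-$\ell$ neighbors of box $m$; $\mathcal{F}_m$ is the set of remaining active DOFs (far field). A partition $\mathcal{B}_m=\mathcal{R}_m\cup\mathcal{S}_m$ (redundant/skeleton) and a matrix $T$ of size $|\mathcal{S}_m|\times|\mathcal{R}_m|$ are chosen (via an interpolative decomposition). Writing $R,S,N$ for $\mathcal{R}_m,\mathcal{S}_m,\mathcal{N}_m$, set $X_{RR}=A_{RR}-T^*A_{SR}-A_{RS}T+T^*A_{SS}T$,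 $X_{RS}=A_{RS}-T^*A_{SS}$, $X_{SR}=A_{SR}-A_{SS}T$, $X_{RN}=A_{RN}-T^*A_{SN}$, $X_{NR}=A_{NR}-A_{NS}T$, and, with $X_{RR}$ invertible, $X_{SS}=A_{SS}-X_{SR}X_{RR}^{-1}X_{RS}$, $X_{SN}=A_{SN}-X_{SR}X_{RR}^{-1}X_{RN}$, $X_{NS}=A_{NS}-X_{NR}X_{RR}^{-1}X_{RS}$, $X_{NN}=A_{NN}-X_{NR}X_{RR}^{-1}X_{RN}$. The strongly skeletonized matrix $Z(A;\mathcal{B}_m)$ equals $A$ except that its $(R,R)$ block is $X_{RR}$, all other entries in rows or columns indexed by $R$ are zero, and its $(S,S),(S,N),(N,S),(N,N)$ blocks are $X_{SS},X_{SN},X_{NS},X_{NN}$; all other entries are unchanged. Then $A$ is replaced by $Z(A;\mathcal{B}_m)$ and the DOFs of $\mathcal{R}_m$ become inactive. $Z(K;\mathcal{B}_1,\dots,\mathcal{B}_r)$ denotes the matrix obtained after processing boxes $1,\dots,r$ in order. *)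

theory Defs
  imports "HOL-Analysis.Analysis"
begin

text \<open>A matrix in C^(N x N) is represented by a function nat => nat => complex;
only the entries with indices in {1..N} are relevant. Blocks A_IJ are
restrictions to I x J.\<close>

type_synonym cmat = "nat \<Rightarrow> nat \<Rightarrow> complex"

definition is_inv_on :: "nat set \<Rightarrow> cmat \<Rightarrow> cmat \<Rightarrow> bool" where
  "is_inv_on R X Y \<longleftrightarrow>
     (\<forall>i\<in>R. \<forall>k\<in>R. (\<Sum>j\<in>R. X i j * Y j k) = (if i = k then 1 else 0)
                  \<and> (\<Sum>j\<in>R. Y i j * X j k) = (if i = k then 1 else 0))"

definition invertible_on :: "nat set \<Rightarrow> cmat \<Rightarrow> bool" where
  "invertible_on R X \<longleftrightarrow> (\<exists>Y. is_inv_on R X Y)"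

definition inv_on :: "nat set \<Rightarrow> cmat \<Rightarrow> cmat" where
  "inv_on R X = (SOME Y. is_inv_on R X Y)"

section \<open>Strong skeletonization Z(A; B) for a given partition B = R \<union> S,
  interpolation matrix T (entries T s r, s in S, r in R) and neighbor set N\<close>

text \<open>X_RR = A_RR - T^* A_SR - A_RS T + T^* A_SS T\<close>
definition skXRR :: "cmat \<Rightarrow> nat set \<Rightarrow> nat set \<Rightarrow> cmat \<Rightarrow> cmat" where
  "skXRR A R S T = (\<lambda>i k.
      A i k - (\<Sum>s\<in>S. cnj (T s i) * A s k) - (\<Sum>s\<in>S. A i s * T s k)
      + (\<Sum>s\<in>S. \<Sum>s'\<in>S. cnj (T s i) * A s s' * T s' k))"

text \<open>Rows indexed by R, columns c in S \<union> N: X_Rc = A_Rc - T^* A_Sc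
  (this gives X_RS and X_RN).\<close>
definition skXRrow :: "cmat \<Rightarrow> nat set \<Rightarrow> cmat \<Rightarrow> cmat" where
  "skXRrow A S T = (\<lambda>i c. A i c - (\<Sum>s\<in>S. cnj (T s i) * A s c))"

text \<open>Rows c in S \<union> N, columns indexed by R: X_cR = A_cR - A_cS T
  (this gives X_SR and X_NR).\<close>
definition skXRcol :: "cmat \<Rightarrow> nat set \<Rightarrow> cmat \<Rightarrow> cmat" where
  "skXRcol A S T = (\<lambda>c k. A c k - (\<Sum>s\<in>S. A c s * T s k))"

definition strong_skel :: "cmat \<Rightarrow> nat set \<Rightarrow> nat set \<Rightarrow> cmat \<Rightarrow> nat set \<Rightarrow> cmat" where
  "strong_skel A R S T Nb = (\<lambda>i k.
     if i \<in> R \<and> k \<in> R then skXRR A R S T i k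
     else if i \<in> R \<or> k \<in> R then 0
     else if i \<in> S \<union> Nb \<and> k \<in> S \<union> Nb then
       A i k - (\<Sum>p\<in>R. \<Sum>q\<in>R. skXRcol A S T i p * inv_on R (skXRR A R S T) p q
                                 * skXRrow A S T q k)
     else A i k)"

text \<open>Generic over the box type 'b, the membership predicate inb (inb bx i: DOF i
  lies in box bx), the neighbor relation nbr, and the processing order ord
  (box number m is ord ! (m - 1)). The choices at step m are Rs m, Ss m, Ts m.
  The state after processing boxes 1..m is (matrix, set of active DOFs).\<close>

fun skel_state :: "cmat \<Rightarrow> nat \<Rightarrow> ('b \<Rightarrow> nat \<Rightarrow> bool) \<Rightarrow> ('b \<Rightarrow> 'b \<Rightarrow> bool) \<Rightarrow> 'b list
      \<Rightarrow> (nat \<Rightarrow> nat set) \<Rightarrow> (nat \<Rightarrow> nat set) \<Rightarrow> (nat \<Rightarrow> cmat) \<Rightarrow> nat \<Rightarrow> cmat \<times> nat set" where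
  "skel_state K N inb nbr ord Rs Ss Ts 0 = (K, {1..N})"
| "skel_state K N inb nbr ord Rs Ss Ts (Suc m) =
     (let st = skel_state K N inb nbr ord Rs Ss Ts m;
          A = fst st; act = snd st; bx = ord ! m;
          Nb = {i \<in> act. \<exists>b'. nbr bx b' \<and> inb b' i}
      in (strong_skel A (Rs (Suc m)) (Ss (Suc m)) (Ts (Suc m)) Nb, act - Rs (Suc m)))"

text \<open>B_m: active DOFs (before processing box m) lying in box m.\<close>
definition skel_B :: "cmat \<Rightarrow> nat \<Rightarrow> ('b \<Rightarrow> nat \<Rightarrow> bool) \<Rightarrow> ('b \<Rightarrow> 'b \<Rightarrow> bool) \<Rightarrow> 'b list
      \<Rightarrow> (nat \<Rightarrow> nat set) \<Rightarrow> (nat \<Rightarrow> nat set) \<Rightarrow> (nat \<Rightarrow> cmat) \<Rightarrow> nat \<Rightarrow> nat set" where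
  "skel_B K N inb nbr ord Rs Ss Ts m =
     {i \<in> snd (skel_state K N inb nbr ord Rs Ss Ts (m - 1)). inb (ord ! (m - 1)) i}"

text \<open>The cube is Omega = a + [0, D_L]^d with D_L = 2^(L-1) D_1. Levels are 1 (leaves)
  to L (root). A box at level l is (l, b) with integer coordinates b k < 2^(L-l);
  it is the set a + prod_k [b_k D_l, (b_k+1) D_l). Boxes are taken half-open, except that
  points on the upper faces of Omega belong to the last box (a convention resolving
  ownership of boundary points). Each point lies in exactly one leaf.\<close>

definition cube :: "real^'d \<Rightarrow> real \<Rightarrow> nat \<Rightarrow> (real^'d) set" where
  "cube a D1 L = {y. \<forall>k. a $ k \<le> y $ k \<and> y $ k \<le> a $ k + 2 ^ (L - 1) * D1}"

definition leaf_index :: "real^'d \<Rightarrow> real \<Rightarrow> nat \<Rightarrow> real^'d \<Rightarrow> 'd \<Rightarrow> nat" where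
  "leaf_index a D1 L y = (\<lambda>k. min (2 ^ (L - 1) - 1) (nat \<lfloor>(y $ k - a $ k) / D1\<rfloor>))"

definition is_box :: "nat \<Rightarrow> nat \<times> ('d \<Rightarrow> nat) \<Rightarrow> bool" where
  "is_box L bx \<longleftrightarrow> 1 \<le> fst bx \<and> fst bx \<le> L \<and> (\<forall>k. snd bx k < 2 ^ (L - fst bx))"

definition in_box :: "real^'d \<Rightarrow> real \<Rightarrow> nat \<Rightarrow> (nat \<Rightarrow> real^'d) \<Rightarrow> nat \<times> ('d \<Rightarrow> nat) \<Rightarrow> nat \<Rightarrow> bool" where
  "in_box a D1 L x bx i \<longleftrightarrow>
     (\<forall>k. leaf_index a D1 L (x i) k div 2 ^ (fst bx - 1) = snd bx k)"

text \<open>Two distinct boxes of the same level are neighbors iff they are adjacent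
  (share at least a corner).\<close>
definition box_nbr :: "nat \<Rightarrow> nat \<times> ('d \<Rightarrow> nat) \<Rightarrow> nat \<times> ('d \<Rightarrow> nat) \<Rightarrow> bool" where
  "box_nbr L bx bx' \<longleftrightarrow> is_box L bx' \<and> fst bx' = fst bx \<and> snd bx' \<noteq> snd bx \<and>
     (\<forall>k. snd bx k \<le> snd bx' k + 1 \<and> snd bx' k \<le> snd bx k + 1)"

end

theory Submission
  imports Defs
begin

lemma dc1: "(u::nat) \<le> v + 1 \<Longrightarrow> u div c \<le> v div c + 1"
proof (cases "c = 0")
  case False
  assume "u \<le> v + 1"
  hence "u \<le> v + c" using False by linarith
  hence "u div c \<le> (v + c) div c" by (rule div_le_mono)
  thus ?thesis using False by simp
qed simp

lemma dc2: "(u::nat) \<le> v + 2 \<Longrightarrow> 1 \<le> e \<Longrightarrow> u div 2^e \<le> v div 2^e + 1"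
proof -
  assume a: "u \<le> v + 2" "1 \<le> e"
  then obtain f where e: "e = Suc f" by (cases e) auto
  have "u div 2 \<le> v div 2 + 1" using a(1) by linarith
  hence "u div 2 div 2^f \<le> v div 2 div 2^f + 1" by (rule dc1)
  thus ?thesis by (simp add: e div_mult2_eq)
qed

lemma divlev: "(u::nat) div 2^(b) = (u div 2^a) div 2^(b - a)" if "a \<le> b"
proof -
  have "(2::nat)^b = 2^a * 2^(b-a)" using that by (simp flip: power_add)
  thus ?thesis by (simp add: div_mult2_eq)
qed

lemma close_lemma:
  fixes up uq s :: "'d \<Rightarrow> nat" and a b :: nat
  assumes "\<forall>k. up k div 2^a \<le> s k + 1 \<and> s k \<le> up k div 2^a + 1"
    and "\<forall>k. uq k div 2^a \<le> s k + 1 \<and> s k \<le> uq k div 2^a + 1"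
    and "a < b"
  shows "\<forall>k. up k div 2^b \<le> uq k div 2^b + 1 \<and> uq k div 2^b \<le> up k div 2^b + 1"
proof
  fix k
  have e: "1 \<le> b - a" using assms(3) by simp
  have "up k div 2^a \<le> uq k div 2^a + 2" "uq k div 2^a \<le> up k div 2^a + 2"
    using assms(1,2) by (metis add_le_mono1 add_2_eq_Suc' le_trans numeral_One one_add_one add.assoc)+
  hence "up k div 2^a div 2^(b-a) \<le> uq k div 2^a div 2^(b-a) + 1"
        "uq k div 2^a div 2^(b-a) \<le> up k div 2^a div 2^(b-a) + 1"
    using dc2 e by blast+
  thus "up k div 2^b \<le> uq k div 2^b + 1 \<and> uq k div 2^b \<le> up k div 2^b + 1"
    using divlev[of a b] assms(3) by simp
qed


theorem corollary3p2:
  fixes K :: "nat \<Rightarrow> nat \<Rightarrow> complex" and N :: nat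
    and x :: "nat \<Rightarrow> real^'d::finite" and a :: "real^'d" and D1 :: real and L :: nat
    and ord :: "(nat \<times> ('d \<Rightarrow> nat)) list"
    and Rs Ss :: "nat \<Rightarrow> nat set" and Ts :: "nat \<Rightarrow> nat \<Rightarrow> nat \<Rightarrow> complex"
    and l r :: nat
  assumes dim: "CARD('d) = 2 \<or> CARD('d) = 3"
    and D1pos: "D1 > 0" and L1: "L \<ge> 1"
    and pts: "\<forall>i\<in>{1..N}. x i \<in> cube a D1 L"
    and ord_distinct: "distinct ord"
    and ord_set: "set ord = {bx. is_box L bx}"
    and ord_levels: "sorted (map fst ord)"
    and choices: "\<forall>m\<in>{1..r}.
        Rs m \<union> Ss m = skel_B K N (in_box a D1 L x) (box_nbr L) ord Rs Ss Ts m
        \<and> Rs m \<inter> Ss m = {}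
        \<and> invertible_on (Rs m)
             (skXRR (fst (skel_state K N (in_box a D1 L x) (box_nbr L) ord Rs Ss Ts (m - 1)))
                    (Rs m) (Ss m) (Ts m))"
    and l1: "l \<ge> 1"
    and r_last: "1 \<le> r \<and> r \<le> length ord \<and> fst (ord ! (r - 1)) = l
                 \<and> (r = length ord \<or> fst (ord ! r) \<noteq> l)"
  shows "let A = fst (skel_state K N (in_box a D1 L x) (box_nbr L) ord Rs Ss Ts r);
             act = snd (skel_state K N (in_box a D1 L x) (box_nbr L) ord Rs Ss Ts r)
         in \<forall>j. r < j \<and> j \<le> length ord \<longrightarrow>
              (let bx = ord ! (j - 1);
                   Bj = {i \<in> act. in_box a D1 L x bx i};
                   Fj = {i \<in> act. \<not> in_box a D1 L x bx i
                                  \<and> \<not> (\<exists>bx'. box_nbr L bx bx' \<and> in_box a D1 L x bx' i)}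
               in \<forall>p\<in>Fj. \<forall>q\<in>Bj. A p q = K p q \<and> A q p = K q p)"
proof -
  define inb where "inb = in_box a D1 L x"
  define nb :: "nat \<times> ('d \<Rightarrow> nat) \<Rightarrow> _" where "nb = box_nbr L"
  define st where "st = skel_state K N inb nb ord Rs Ss Ts"
  define li where "li = (\<lambda>i. leaf_index a D1 L (x i))"
  have inb_iff: "\<And>bx i. inb bx i \<longleftrightarrow> (\<forall>k. li i k div 2^(fst bx - 1) = snd bx k)"
    by (simp add: inb_def li_def in_box_def)
  have srt: "\<And>i j. i \<le> j \<Longrightarrow> j < length ord \<Longrightarrow> fst (ord!i) \<le> fst (ord!j)"
    using sorted_nth_mono[OF ord_levels] by fastforce
  have main: "\<forall>j. r < j \<and> j \<le> length ord \<longrightarrow>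
     (let bx = ord!(j-1); Bj = {i \<in> snd (st r). inb bx i};
          Fj = {i \<in> snd (st r). \<not> inb bx i \<and> \<not> (\<exists>bx'. nb bx bx' \<and> inb bx' i)}
      in \<forall>p\<in>Fj. \<forall>q\<in>Bj. fst (st r) p q = K p q \<and> fst (st r) q p = K q p)"
  proof (intro allI impI)
    fix j assume j: "r < j \<and> j \<le> length ord"
    define bx where "bx = ord ! (j-1)"
    define lj where "lj = fst bx"
    have rl: "r < length ord" using j by simp
    have "l \<le> fst (ord!r)" using srt[of "r-1" r] r_last rl by simp
    hence "l < fst (ord!r)" using r_last rl by auto
    moreover have "fst (ord!r) \<le> lj" unfolding lj_def bx_def proof (rule srt) show "r \<le> j - 1" "j - 1 < length ord" using j by auto qed
    ultimately have lev: "l < lj" by simp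
    have lev2: "\<And>m. m < r \<Longrightarrow> fst (ord!m) \<le> l" 
    proof -
      fix m assume "m < r"
      have "fst (ord!m) \<le> fst (ord!(r-1))" proof (rule srt) show "m \<le> r - 1" "r - 1 < length ord" using \<open>m < r\<close> rl by auto qed
      thus "fst (ord!m) \<le> l" using r_last by simp
    qed
    define cl where "cl = (\<lambda>p q. \<forall>k. li p k div 2^(lj-1) \<le> li q k div 2^(lj-1) + 1
                                   \<and> li q k div 2^(lj-1) \<le> li p k div 2^(lj-1) + 1)"
    have inv: "\<forall>p\<in>snd (st m). \<forall>q\<in>snd (st m). \<not> cl p q \<longrightarrow> fst (st m) p q = K p q"
      if "m \<le> r" for m
      using that
    proof (induction m)
      case 0 show ?case by (simp add: st_def)
    next
      case (Suc m)
      define A where "A = fst (st m)"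
      define act where "act = snd (st m)"
      define b where "b = ord ! m"
      define Nb where "Nb = {i \<in> act. \<exists>b'. nb b b' \<and> inb b' i}"
      have stS: "st (Suc m) = (strong_skel A (Rs (Suc m)) (Ss (Suc m)) (Ts (Suc m)) Nb, act - Rs (Suc m))"
        by (simp add: st_def A_def act_def b_def Nb_def Let_def)
      have ch: "Rs (Suc m) \<union> Ss (Suc m) = {i \<in> act. inb b i}"
        using choices Suc.prems by (simp add: skel_B_def act_def st_def inb_def nb_def b_def)
      have lb: "fst b \<le> l" using lev2 Suc.prems unfolding b_def by simp
      have near: "\<forall>k. li i k div 2^(fst b - 1) \<le> snd b k + 1 \<and> snd b k \<le> li i k div 2^(fst b - 1) + 1"
        if iSN: "i \<in> Ss (Suc m) \<union> Nb" for i
      proof (cases "i \<in> Ss (Suc m)")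
        case True
        hence "inb b i" using ch by auto
        thus ?thesis using inb_iff by simp
      next
        case False
        then obtain b' where "nb b b'" "inb b' i" using iSN False unfolding Nb_def by blast
        thus ?thesis using inb_iff unfolding nb_def box_nbr_def by auto
      qed
      show ?case
      proof (intro ballI impI)
        fix p q assume p: "p \<in> snd (st (Suc m))" and q: "q \<in> snd (st (Suc m))" and ncl: "\<not> cl p q"
        have pa: "p \<in> act" "p \<notin> Rs (Suc m)" using p stS by auto
        have qa: "q \<in> act" "q \<notin> Rs (Suc m)" using q stS by auto
        have notboth: "\<not> (p \<in> Ss (Suc m) \<union> Nb \<and> q \<in> Ss (Suc m) \<union> Nb)"
        proof
          assume h: "p \<in> Ss (Suc m) \<union> Nb \<and> q \<in> Ss (Suc m) \<union> Nb"
          have "fst b - 1 < lj - 1" using lb lev l1 by linarith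
          from close_lemma[OF near[of p] near[of q] this] h have "cl p q" unfolding cl_def by auto
          thus False using ncl by simp
        qed
        have "fst (st (Suc m)) p q = strong_skel A (Rs (Suc m)) (Ss (Suc m)) (Ts (Suc m)) Nb p q"
          using stS by simp
        also have "\<dots> = A p q"
          using pa(2) qa(2) notboth unfolding strong_skel_def by (simp del: Un_iff) blast
        also have "\<dots> = K p q" using Suc.IH Suc.prems pa qa ncl by (simp add: A_def act_def)
        finally show "fst (st (Suc m)) p q = K p q" .
      qed
    qed
    have bxb: "is_box L bx" 
    proof -
      have "j - 1 < length ord" using j by auto
      hence "bx \<in> set ord" unfolding bx_def by simp
      thus ?thesis using ord_set by simp
    qed
    have far: "\<not> cl p q" if p: "\<not> inb bx p \<and> \<not> (\<exists>bx'. nb bx bx' \<and> inb bx' p)"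
       and q: "inb bx q" for p q
    proof
      assume c: "cl p q"
      define c where "c = (\<lambda>k. li p k div 2^(lj-1))"
      have qc: "\<And>k. li q k div 2^(lj-1) = snd bx k" using q inb_iff lj_def by simp
      show False
      proof (cases "c = snd bx")
        case True
        hence "inb bx p" using inb_iff lj_def c_def by (metis)
        thus False using p by simp
      next
        case False
        have "c k < 2^(L - lj)" for k
        proof -
          have L2: "(2::nat)^(L-1) = 2^(L-lj) * 2^(lj-1)" using bxb lj_def
            by (simp add: is_box_def flip: power_add)
          have "li p k \<le> 2^(L-1) - 1" by (simp add: li_def leaf_index_def)
          hence "li p k < 2^(L-1)" by (metis One_nat_def Suc_pred le_imp_less_Suc pos2 zero_less_power)
          thus ?thesis unfolding c_def L2 by (rule less_mult_imp_div_less)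
        qed
        hence "is_box L (lj, c)" using bxb lj_def by (simp add: is_box_def)
        moreover have "inb (lj, c) p" using inb_iff c_def by simp
        moreover have "\<forall>k. snd bx k \<le> c k + 1 \<and> c k \<le> snd bx k + 1"
          using c qc unfolding cl_def c_def by metis
        ultimately have "nb bx (lj, c)" "inb (lj,c) p" using False lj_def
          unfolding nb_def box_nbr_def by auto
        thus False using p by blast
      qed
    qed
    have cls: "cl p q \<longleftrightarrow> cl q p" for p q unfolding cl_def by auto
    show "let bx = ord!(j-1); Bj = {i \<in> snd (st r). inb bx i};
          Fj = {i \<in> snd (st r). \<not> inb bx i \<and> \<not> (\<exists>bx'. nb bx bx' \<and> inb bx' i)}
      in \<forall>p\<in>Fj. \<forall>q\<in>Bj. fst (st r) p q = K p q \<and> fst (st r) q p = K q p"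
      unfolding Let_def bx_def[symmetric]
    proof (intro ballI)
      fix p q assume p: "p \<in> {i \<in> snd (st r). \<not> inb bx i \<and> \<not> (\<exists>bx'. nb bx bx' \<and> inb bx' i)}"
        and q: "q \<in> {i \<in> snd (st r). inb bx i}"
      have "\<not> cl p q" using far p q by auto
      thus "fst (st r) p q = K p q \<and> fst (st r) q p = K q p"
        using inv[of r] p q cls by auto
    qed
  qed
  thus ?thesis by (simp add: st_def inb_def nb_def)
qed

end
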